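(* There is an absolute constant $a>0$ such that the following holds. For any $c\ge 1$ and any $T$ with $8n<T\le \frac{n^2}{2048c^2}$, any (possibly randomized and adaptive) algorithm that, on every correlation clustering instance on $n$ vertices, outputs a clustering with expected cost at most $c\cdot\mathrm{OPT}+T$ must make at least $a\cdot\frac{n^3}{Tc^2}$ adaptive edge similarity queries, i.e. $\Omega\!\left(\frac{n^3}{Tc^2}\right)$ queries.
   Context: Correlation clustering: the input is $V=[n]$ and a complete graph on $V$ with edges labeled ``$+$'' or ``$-$''; $s(x,y)=1$ iff $\{x,y\}$ is a ``$+$'' edge. A clustering is a function $\ell:V\to\mathbb{N}$; its cost is $\sum_{\{x,y\}:\ell(x)=\ell(y)}(1-s(x,y))+\sum_{\{x,y\}:\ell(x)\neq\ell(y)}s(x,y)$, and $\mathrm{OPT}$ is the minimum cost over all clusterings of the instance. The algorithm has access to the instance only through edge similarity queries: querying a pair $(x,y)$ reveals $s(x,y)$; queries may be chosen adaptively based on previous answers. *)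

theory Defs
  imports "HOL-Probability.Probability"
begin

text \<open>Vertices are V = {0..<n} (standing for [n]). An instance is a symmetric
 similarity predicate s; s x y = True iff {x,y} is a "+" edge. Outside V it is False.\<close>

definition cc_instance :: "nat \<Rightarrow> (nat \<Rightarrow> nat \<Rightarrow> bool) \<Rightarrow> bool" where
  "cc_instance n s \<longleftrightarrow> (\<forall>x y. s x y = s y x) \<and> (\<forall>x y. s x y \<longrightarrow> x < n \<and> y < n)"

definition cc_cost :: "nat \<Rightarrow> (nat \<Rightarrow> nat \<Rightarrow> bool) \<Rightarrow> (nat \<Rightarrow> nat) \<Rightarrow> nat" where
  "cc_cost n s l =
     card {(x, y). x < y \<and> y < n \<and> l x = l y \<and> \<not> s x y}
   + card {(x, y). x < y \<and> y < n \<and> l x \<noteq> l y \<and> s x y}"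

definition cc_OPT :: "nat \<Rightarrow> (nat \<Rightarrow> nat \<Rightarrow> bool) \<Rightarrow> nat" where
  "cc_OPT n s = (LEAST k. \<exists>l. cc_cost n s l = k)"

text \<open>A deterministic adaptive query algorithm is a decision tree: an inner node
 queries the pair (x,y) and branches on the answer s x y; a leaf outputs a clustering.\<close>
datatype qtree = Leaf "nat \<Rightarrow> nat" | Query nat nat qtree qtree

fun qt_output :: "qtree \<Rightarrow> (nat \<Rightarrow> nat \<Rightarrow> bool) \<Rightarrow> (nat \<Rightarrow> nat)" where
  "qt_output (Leaf l) s = l"
| "qt_output (Query x y t f) s = (if s x y then qt_output t s else qt_output f s)"

fun qt_queries :: "qtree \<Rightarrow> (nat \<Rightarrow> nat \<Rightarrow> bool) \<Rightarrow> nat" where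
  "qt_queries (Leaf l) s = 0"
| "qt_queries (Query x y t f) s = Suc (if s x y then qt_queries t s else qt_queries f s)"

text \<open>A randomized adaptive algorithm is a probability distribution over decision trees.\<close>
definition expected_cost :: "nat \<Rightarrow> qtree pmf \<Rightarrow> (nat \<Rightarrow> nat \<Rightarrow> bool) \<Rightarrow> real" where
  "expected_cost n A s = measure_pmf.expectation A (\<lambda>t. real (cc_cost n s (qt_output t s)))"

end

theory Submission
  imports Defs
begin


fun qs :: "qtree \<Rightarrow> (nat\<Rightarrow>nat\<Rightarrow>bool) \<Rightarrow> (nat\<times>nat) set" where
  "qs (Leaf l) s = {}"
| "qs (Query x y t f) s = insert (x,y) (if s x y then qs t s else qs f s)"

fun qv :: "qtree \<Rightarrow> (nat\<Rightarrow>nat\<Rightarrow>bool) \<Rightarrow> nat \<Rightarrow> nat" where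
  "qv (Leaf l) s v = 0"
| "qv (Query x y t f) s v = (if v = x \<or> v = y then 1 else 0) + (if s x y then qv t s v else qv f s v)"

lemma qs_agree:
  "(\<forall>p\<in>qs t s. s (fst p) (snd p) = s' (fst p) (snd p)) \<Longrightarrow>
    qt_output t s' = qt_output t s \<and> qv t s' v = qv t s v"
  by (induction t) auto

lemma finite_qs: "finite (qs t s)"
  by (induction t) auto

lemma qv_sum: "finite S \<Longrightarrow> (\<Sum>v\<in>S. qv t s v) \<le> 2 * qt_queries t s"
proof (induction t)
  case (Leaf x)
  then show ?case by simp
next
  case (Query x y t1 t2)
  have "(\<Sum>v\<in>S. (if v = x \<or> v = y then 1 else 0::nat)) = card (S \<inter> {v. v = x \<or> v = y})"
    using Query.prems by (simp add: sum.If_cases)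
  also have "\<dots> \<le> card {x,y}"
    by (rule card_mono) auto
  also have "\<dots> \<le> 2" by (simp add: card_insert_le_m1)
  finally have h: "(\<Sum>v\<in>S. (if v = x \<or> v = y then 1 else 0::nat)) \<le> 2" .
  have "(\<Sum>v\<in>S. qv (Query x y t1 t2) s v) = (\<Sum>v\<in>S. (if v = x \<or> v = y then 1 else 0::nat)) + 
     (\<Sum>v\<in>S. (if s x y then qv t1 s v else qv t2 s v))"
    by (simp add: sum.distrib)
  then show ?case using h Query by (cases "s x y") auto
qed

definition partners :: "qtree \<Rightarrow> (nat\<Rightarrow>nat\<Rightarrow>bool) \<Rightarrow> nat \<Rightarrow> nat set" where
  "partners t s v = {p. (v,p) \<in> qs t s \<or> (p,v) \<in> qs t s}"

lemma finite_partners: "finite (partners t s v)"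
proof -
  have "partners t s v \<subseteq> snd ` qs t s \<union> fst ` qs t s"
    unfolding partners_def by force
  then show ?thesis using finite_qs by (meson finite_Un finite_imageI finite_subset)
qed

lemma card_partners: "card (partners t s v) \<le> qv t s v"
proof (induction t)
  case (Leaf x)
  then show ?case by (simp add: partners_def)
next
  case (Query x y t1 t2)
  define N where "N = {p. (v,p) = (x,y) \<or> (p,v) = (x,y)}"
  have N1: "card N \<le> (if v = x \<or> v = y then 1 else 0)"
  proof (cases "v = x \<or> v = y")
    case True
    have "N \<subseteq> {if v = x then y else x}" unfolding N_def using True by auto
    then have "card N \<le> card {if v = x then y else x}" by (rule card_mono[rotated]) simp
    then show ?thesis using True by simp
  next
    case False
    then have "N = {}" unfolding N_def by auto
    then show ?thesis by simp
  qed
  have eq: "partners (Query x y t1 t2) s v = N \<union> partners (if s x y then t1 else t2) s v"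
    unfolding partners_def N_def by auto
  have "card (partners (Query x y t1 t2) s v) \<le> card N + card (partners (if s x y then t1 else t2) s v)"
    unfolding eq by (rule card_Un_le)
  then show ?case using N1 Query by (cases "s x y") auto
qed



definition lab :: "nat \<Rightarrow> nat \<Rightarrow> nat set \<Rightarrow> (nat\<Rightarrow>nat) \<Rightarrow> nat \<Rightarrow> nat" where
  "lab m k F \<sigma> x = (if x < m*k then x div k else if x \<in> F \<and> \<sigma> x < m then \<sigma> x else m + x)"

definition inst :: "nat \<Rightarrow> nat \<Rightarrow> nat \<Rightarrow> nat set \<Rightarrow> (nat\<Rightarrow>nat) \<Rightarrow> nat \<Rightarrow> nat \<Rightarrow> bool" where
  "inst n m k F \<sigma> x y = (x < n \<and> y < n \<and> x \<noteq> y \<and> lab m k F \<sigma> x = lab m k F \<sigma> y)"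

definition costv :: "nat \<Rightarrow> (nat\<Rightarrow>nat\<Rightarrow>bool) \<Rightarrow> (nat\<Rightarrow>nat) \<Rightarrow> nat \<Rightarrow> nat" where
  "costv n s l v = card {y. y < n \<and> y \<noteq> v \<and> (l y = l v) \<noteq> s v y}"

lemma core_v:
  assumes F: "F \<subseteq> {m*k..<n}" and v: "v \<in> F" and m: "m \<ge> 1"
  shows "m * (\<Sum>j<2*m. costv n (inst n m k F (\<tau>(v:=j))) (qt_output t (inst n m k F (\<tau>(v:=j)))) v)
        + k * (\<Sum>j<2*m. qv t (inst n m k F (\<tau>(v:=j))) v) \<ge> m*k*(m-1)"
proof -
  define s where "s j = inst n m k F (\<tau>(v:=j))" for j
  define r where "r = qv t (s m) v"
  define l0 where "l0 = qt_output t (s m)"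
  define Bad where "Bad = lab m k F (\<tau>(v:=m)) ` partners t (s m) v"
  define Good where "Good = {..<m} - Bad"
  have vge: "v \<ge> m*k" "v < n" using F v by auto
  have labo: "lab m k F (\<tau>(v:=j)) x = lab m k F (\<tau>(v:=m)) x" if "x \<noteq> v" for x j
    using that by (simp add: lab_def)
  have labv: "lab m k F (\<tau>(v:=j)) v = (if j < m then j else m + v)" for j
    using vge v by (simp add: lab_def)
  have labm: "lab m k F \<sigma> x = m + v \<Longrightarrow> x = v" for \<sigma> x
    by (auto simp: lab_def split: if_splits) (metis less_mult_imp_div_less mult.commute not_add_less1)
  have cardBad: "card Bad \<le> r"
    unfolding Bad_def r_def using card_image_le[OF finite_partners] card_partners le_trans by blast
  have cardGood: "card Good + r \<ge> m"
  proof -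
    have "card Good \<ge> card {..<m} - card Bad" unfolding Good_def by (rule diff_card_le_card_Diff) (simp add: Bad_def finite_partners)
    then show ?thesis using cardBad by simp
  qed
  have sm: "s j = s m" if "j \<ge> m" for j
  proof -
    have "lab m k F (\<tau>(v:=j)) x = lab m k F (\<tau>(v:=m)) x" for x
      using that labo[of x j] labv[of j] labv[of m] by (cases "x = v") auto
    then show ?thesis unfolding s_def inst_def by (intro ext) simp
  qed
  have good: "qt_output t (s j) = l0 \<and> qv t (s j) v = r" if "j \<in> Good" for j
  proof -
    have jm: "j < m" "j \<notin> Bad" using that Good_def by auto
    have "s m x y = s j x y" if "(x,y) \<in> qs t (s m)" for x y
    proof (cases "x = v \<or> y = v")
      case False
      then show ?thesis unfolding s_def inst_def using labo[of x j] labo[of y j] by simp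
    next
      case True
      then show ?thesis
      proof
        assume xv: "x = v"
        have yp: "y \<in> partners t (s m) v" using that xv unfolding partners_def by auto
        have "lab m k F (\<tau>(v:=m)) y \<noteq> j" using jm yp Bad_def by auto
        moreover have "lab m k F (\<tau>(v:=m)) y \<noteq> m + v" if "y \<noteq> v" using labm that by blast
        ultimately show ?thesis unfolding s_def inst_def using xv labo[of y j] labv[of j] labv[of m] jm by auto
      next
        assume yv: "y = v"
        have yp: "x \<in> partners t (s m) v" using that yv unfolding partners_def by auto
        have "lab m k F (\<tau>(v:=m)) x \<noteq> j" using jm yp Bad_def by auto
        moreover have "lab m k F (\<tau>(v:=m)) x \<noteq> m + v" if "x \<noteq> v" using labm that by blast
        ultimately show ?thesis unfolding s_def inst_def using yv labo[of x j] labv[of j] labv[of m] jm by auto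
      qed
    qed
    then show ?thesis using qs_agree[of t "s m" "s j" v] unfolding l0_def r_def by auto
  qed
  have pair: "costv n (s j1) l0 v + costv n (s j2) l0 v \<ge> 2*k" if "j1 < m" "j2 < m" "j1 \<noteq> j2" for j1 j2
  proof -
    define D where "D j = {y. y < n \<and> y \<noteq> v \<and> (l0 y = l0 v) \<noteq> s j v y}" for j
    define B where "B j = {j*k..<j*k+k}" for j
    have inB: "y < n \<and> y \<noteq> v \<and> lab m k F (\<tau>(v:=i)) y = j" if "y \<in> B j" "j < m" for y j i
    proof -
      have "j*k + k \<le> m*k" using that(2) by (metis add.commute mult.commute mult_Suc_right mult_le_mono2 Suc_leI)
      then have y: "y < m*k" using that(1) B_def by auto
      have "y div k = j" using that(1) unfolding B_def by (intro div_nat_eqI) (auto simp: mult.commute)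
      then show ?thesis using y vge by (auto simp: lab_def)
    qed
    have sv: "s j v y = (y < n \<and> y \<noteq> v \<and> lab m k F (\<tau>(v:=m)) y = j)" if "j < m" for j y
      unfolding s_def inst_def using labo[of y j] labv[of j] that vge by auto
    have sub: "B j1 \<union> B j2 \<subseteq> D j1 \<union> D j2"
    proof
      fix y assume "y \<in> B j1 \<union> B j2"
      then show "y \<in> D j1 \<union> D j2"
      proof
        assume "y \<in> B j1"
        then have "y < n \<and> y \<noteq> v \<and> lab m k F (\<tau>(v:=m)) y = j1" using inB that by blast
        then show ?thesis using sv[of j1 y] sv[of j2 y] that unfolding D_def by auto
      next
        assume "y \<in> B j2"
        then have "y < n \<and> y \<noteq> v \<and> lab m k F (\<tau>(v:=m)) y = j2" using inB that by blast
        then show ?thesis using sv[of j1 y] sv[of j2 y] that unfolding D_def by auto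
      qed
    qed
    have disj: "B j1 \<inter> B j2 = {}"
    proof (rule ccontr)
      assume "B j1 \<inter> B j2 \<noteq> {}"
      then obtain y where "y \<in> B j1" "y \<in> B j2" by blast
      then show False using inB[of y j1 m] inB[of y j2 m] that by auto
    qed
    have "2*k = card (B j1 \<union> B j2)" using disj by (simp add: B_def card_Un_disjoint)
    also have "\<dots> \<le> card (D j1 \<union> D j2)" using sub by (rule card_mono[rotated]) (auto simp: D_def)
    also have "\<dots> \<le> card (D j1) + card (D j2)" by (rule card_Un_le)
    finally show ?thesis unfolding costv_def D_def by simp
  qed
  define Low where "Low = {j\<in>Good. costv n (s j) l0 v < k}"
  have finG: "finite Good" unfolding Good_def by simp
  have LowG: "Low \<subseteq> Good" unfolding Low_def by auto
  have cardLow: "card Low \<le> 1"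
  proof -
    have "\<forall>a1\<in>Low. \<forall>a2\<in>Low. a1 = a2"
    proof (intro ballI, rule ccontr)
      fix a1 a2 assume a: "a1 \<in> Low" "a2 \<in> Low" "a1 \<noteq> a2"
      then have "a1 < m" "a2 < m" unfolding Low_def Good_def by auto
      then show False using pair[of a1 a2] a unfolding Low_def by auto
    qed
    moreover have "finite Low" using finG LowG finite_subset by blast
    ultimately show ?thesis using card_le_Suc0_iff_eq[of Low] by auto
  qed
  have "k * card (Good - Low) = (\<Sum>j\<in>Good-Low. k)" by simp
  also have "\<dots> \<le> (\<Sum>j\<in>Good-Low. costv n (s j) l0 v)"
    by (rule sum_mono) (auto simp: Low_def)
  also have "\<dots> \<le> (\<Sum>j\<in>Good. costv n (s j) l0 v)"
    by (rule sum_mono2) (auto simp: finG)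
  also have "\<dots> = (\<Sum>j\<in>Good. costv n (s j) (qt_output t (s j)) v)"
    using good by simp
  also have "\<dots> \<le> (\<Sum>j<2*m. costv n (s j) (qt_output t (s j)) v)"
    by (rule sum_mono2) (auto simp: Good_def)
  finally have c0: "k * card (Good - Low) \<le> (\<Sum>j<2*m. costv n (s j) (qt_output t (s j)) v)" .
  have "card (Good - Low) \<ge> card Good - 1"
    using card_Diff_subset[OF finite_subset[OF LowG finG] LowG] cardLow by simp
  then have c1: "(\<Sum>j<2*m. costv n (s j) (qt_output t (s j)) v) \<ge> k * (card Good - 1)"
    using c0 by (meson le_trans mult_le_mono2)
  have "(\<Sum>j\<in>{m..<2*m}. qv t (s j) v) = (\<Sum>j\<in>{m..<2*m}. r)"
    by (intro sum.cong refl) (metis atLeastLessThan_iff sm r_def)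
  then have "m * r = (\<Sum>j\<in>{m..<2*m}. qv t (s j) v)" by simp
  also have "\<dots> \<le> (\<Sum>j<2*m. qv t (s j) v)"
    by (rule sum_mono2) auto
  finally have c2: "(\<Sum>j<2*m. qv t (s j) v) \<ge> m * r" .
  have "m*k*(m-1) \<le> m*k*((card Good - 1) + r)" using cardGood by (intro mult_le_mono2) arith
  also have "\<dots> = m * (k * (card Good - 1)) + k * (m * r)" by (simp add: algebra_simps)
  also have "\<dots> \<le> m * (\<Sum>j<2*m. costv n (s j) (qt_output t (s j)) v) + k * (\<Sum>j<2*m. qv t (s j) v)"
    using c1 c2 by (intro add_mono mult_le_mono2) auto
  finally show ?thesis unfolding s_def .
qed



lemma cost_decomp:
  assumes sym: "\<And>x y. s x y = s y x" and F: "F \<subseteq> {..<n}"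
  shows "(\<Sum>v\<in>F. costv n s l v) \<le> 2 * cc_cost n s l"
proof -
  define P where "P v y = (y < n \<and> y \<noteq> v \<and> (l y = l v) \<noteq> s v y)" for v y
  define M where "M = (SIGMA v:{..<n}. {y. P v y})"
  define M1 where "M1 = {(x,y). x < y \<and> y < n \<and> (l y = l x) \<noteq> s x y}"
  have fin: "finite ({..<n} \<times> {..<n::nat})" by simp
  have M1sub: "M1 \<subseteq> {..<n} \<times> {..<n}" unfolding M1_def by auto
  have cM1: "card M1 \<le> cc_cost n s l"
  proof -
    have eq: "M1 = {(x, y). x < y \<and> y < n \<and> l x = l y \<and> \<not> s x y} \<union> {(x, y). x < y \<and> y < n \<and> l x \<noteq> l y \<and> s x y}"
      unfolding M1_def by auto
    show ?thesis unfolding cc_cost_def eq by (rule card_Un_le)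
  qed
  have "(\<Sum>v\<in>F. costv n s l v) \<le> (\<Sum>v<n. costv n s l v)"
    using F by (intro sum_mono2) auto
  also have "\<dots> = card M" unfolding M_def costv_def P_def
    by (subst card_SigmaI) auto
  also have "\<dots> \<le> card (M1 \<union> prod.swap ` M1)"
  proof (rule card_mono)
    show "finite (M1 \<union> prod.swap ` M1)" using finite_subset[OF M1sub fin] by simp
    show "M \<subseteq> M1 \<union> prod.swap ` M1"
    proof
      fix p assume "p \<in> M"
      then obtain x y where p: "p = (x,y)" "x < n" "P x y" unfolding M_def by auto
      show "p \<in> M1 \<union> prod.swap ` M1"
      proof (cases "x < y")
        case True
        then show ?thesis using p unfolding M1_def P_def by auto
      next
        case False
        then have "y < x" using p unfolding P_def by auto
        then have "(y,x) \<in> M1" using p sym[of x y] unfolding M1_def P_def by auto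
        then show ?thesis using p by (auto intro: image_eqI[where x="(y,x)"])
      qed
    qed
  qed
  also have "\<dots> \<le> card M1 + card (prod.swap ` M1)" by (rule card_Un_le)
  also have "\<dots> \<le> 2 * card M1" using card_image_le[OF finite_subset[OF M1sub fin], of prod.swap] by simp
  also have "\<dots> \<le> 2 * cc_cost n s l" using cM1 by simp
  finally show ?thesis .
qed



lemma sum_PiE_split:
  assumes v: "v \<in> F" and fin: "finite S"
  shows "(\<Sum>\<sigma>\<in>PiE F (\<lambda>_. S). g \<sigma>) = (\<Sum>\<tau>\<in>PiE (F-{v}) (\<lambda>_. S). \<Sum>j\<in>S. g (\<tau>(v:=j)))"
proof -
  have F: "F = insert v (F-{v})" using v by auto
  have "(\<Sum>\<sigma>\<in>PiE F (\<lambda>_. S). g \<sigma>) = (\<Sum>\<sigma>\<in>(\<lambda>(y, g). g(v := y)) ` (S \<times> PiE (F-{v}) (\<lambda>_. S)). g \<sigma>)"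
    by (subst F, subst PiE_insert_eq) simp
  also have "\<dots> = (\<Sum>p\<in>S \<times> PiE (F-{v}) (\<lambda>_. S). g ((\<lambda>(y, g). g(v := y)) p))"
    by (rule sum.reindex[unfolded comp_def]) (rule inj_combinator, simp)
  also have "\<dots> = (\<Sum>j\<in>S. \<Sum>\<tau>\<in>PiE (F-{v}) (\<lambda>_. S). g (\<tau>(v:=j)))"
    by (subst sum.cartesian_product) (intro sum.cong, auto)
  also have "\<dots> = (\<Sum>\<tau>\<in>PiE (F-{v}) (\<lambda>_. S). \<Sum>j\<in>S. g (\<tau>(v:=j)))"
    by (rule sum.swap)
  finally show ?thesis .
qed

lemma card_PiE_split:
  assumes v: "v \<in> F" and finF: "finite F"
  shows "card (PiE F (\<lambda>_. S)) = card S * card (PiE (F-{v}) (\<lambda>_. S))"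
proof -
  have "card (PiE F (\<lambda>_. S)) = card S ^ card F" using finF by (simp add: card_PiE)
  also have "\<dots> = card S * card S ^ card (F-{v})" using v finF
    by (metis card_Suc_Diff1 power_Suc)
  also have "card S ^ card (F-{v}) = card (PiE (F-{v}) (\<lambda>_. S))" using finF by (simp add: card_PiE)
  finally show ?thesis .
qed

lemma det_bound:
  assumes F: "F \<subseteq> {m*k..<n}" and m: "m \<ge> 1"
    and Qb: "\<forall>\<sigma>\<in>PiE F (\<lambda>_. {..<2*m}). qt_queries t (inst n m k F \<sigma>) \<le> Q"
  shows "card F * card (PiE F (\<lambda>_. {..<2*m})) * k * (m-1)
     \<le> 4*m*(\<Sum>\<sigma>\<in>PiE F (\<lambda>_. {..<2*m}). cc_cost n (inst n m k F \<sigma>) (qt_output t (inst n m k F \<sigma>)))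
       + 4*k*card (PiE F (\<lambda>_. {..<2*m}))*Q"
proof -
  define P where "P = PiE F (\<lambda>_. {..<2*m})"
  define s where "s \<sigma> = inst n m k F \<sigma>" for \<sigma>
  define A where "A v = (\<Sum>\<sigma>\<in>P. costv n (s \<sigma>) (qt_output t (s \<sigma>)) v)" for v
  define B where "B v = (\<Sum>\<sigma>\<in>P. qv t (s \<sigma>) v)" for v
  have finF: "finite F" using F finite_subset by blast
  have finP: "finite P" unfolding P_def using finF by (simp add: finite_PiE)
  have perv: "card P * k * (m-1) \<le> 2 * (m * A v + k * B v)" if v: "v \<in> F" for v
  proof -
    define P' where "P' = PiE (F-{v}) (\<lambda>_. {..<2*m})"
    have cP: "card P = 2*m * card P'" unfolding P_def P'_def using card_PiE_split[OF v finF, of "{..<2*m}"] by simp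
    have A': "A v = (\<Sum>\<tau>\<in>P'. \<Sum>j<2*m. costv n (s (\<tau>(v:=j))) (qt_output t (s (\<tau>(v:=j)))) v)"
      unfolding A_def P_def P'_def by (rule sum_PiE_split[OF v]) simp
    have B': "B v = (\<Sum>\<tau>\<in>P'. \<Sum>j<2*m. qv t (s (\<tau>(v:=j))) v)"
      unfolding B_def P_def P'_def by (rule sum_PiE_split[OF v]) simp
    have "card P' * (m*k*(m-1)) = (\<Sum>\<tau>\<in>P'. m*k*(m-1))" by simp
    also have "\<dots> \<le> (\<Sum>\<tau>\<in>P'. m * (\<Sum>j<2*m. costv n (s (\<tau>(v:=j))) (qt_output t (s (\<tau>(v:=j)))) v)
        + k * (\<Sum>j<2*m. qv t (s (\<tau>(v:=j))) v))"
      by (rule sum_mono) (unfold s_def, rule core_v[OF F v m])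
    also have "\<dots> = m * A v + k * B v" unfolding A' B' by (simp add: sum.distrib sum_distrib_left)
    finally have "card P' * (m*k*(m-1)) \<le> m * A v + k * B v" .
    then show ?thesis unfolding cP by (simp add: algebra_simps)
  qed
  have "card F * card P * k * (m-1) = (\<Sum>v\<in>F. card P * k * (m-1))" by simp
  also have "\<dots> \<le> (\<Sum>v\<in>F. 2 * (m * A v + k * B v))" by (rule sum_mono) (rule perv)
  also have "\<dots> = 2*m*(\<Sum>v\<in>F. A v) + 2*k*(\<Sum>v\<in>F. B v)"
    by (simp add: sum.distrib sum_distrib_left[symmetric] sum_distrib_right[symmetric] mult.assoc)
  also have "(\<Sum>v\<in>F. A v) = (\<Sum>\<sigma>\<in>P. \<Sum>v\<in>F. costv n (s \<sigma>) (qt_output t (s \<sigma>)) v)"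
    unfolding A_def by (rule sum.swap)
  also have "\<dots> \<le> (\<Sum>\<sigma>\<in>P. 2 * cc_cost n (s \<sigma>) (qt_output t (s \<sigma>)))"
  proof (rule sum_mono)
    fix \<sigma> show "(\<Sum>v\<in>F. costv n (s \<sigma>) (qt_output t (s \<sigma>)) v) \<le> 2 * cc_cost n (s \<sigma>) (qt_output t (s \<sigma>))"
      by (rule cost_decomp) (use F in \<open>auto simp: s_def inst_def\<close>)
  qed
  also have "(\<Sum>v\<in>F. B v) = (\<Sum>\<sigma>\<in>P. \<Sum>v\<in>F. qv t (s \<sigma>) v)"
    unfolding B_def by (rule sum.swap)
  also have "\<dots> \<le> (\<Sum>\<sigma>\<in>P. 2 * Q)"
  proof (rule sum_mono)
    fix \<sigma> assume "\<sigma> \<in> P"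
    then have "qt_queries t (s \<sigma>) \<le> Q" using Qb unfolding P_def s_def by blast
    then show "(\<Sum>v\<in>F. qv t (s \<sigma>) v) \<le> 2 * Q" using qv_sum[OF finF, of t "s \<sigma>"] by linarith
  qed
  finally have "card F * card P * k * (m-1) \<le> 2*m*(\<Sum>\<sigma>\<in>P. 2 * cc_cost n (s \<sigma>) (qt_output t (s \<sigma>))) + 2*k*(\<Sum>\<sigma>\<in>P. 2 * Q)"
    by (simp add: mult_le_mono2 add_mono)
  then show ?thesis unfolding P_def s_def by (simp add: sum_distrib_left[symmetric] algebra_simps)
qed



lemma cost_le: "cc_cost n s l \<le> 2*n*n"
proof -
  have "card {(x, y). x < y \<and> y < n \<and> l x = l y \<and> \<not> s x y} \<le> card ({..<n} \<times> {..<n})"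
    by (rule card_mono) auto
  moreover have "card {(x, y). x < y \<and> y < n \<and> l x \<noteq> l y \<and> s x y} \<le> card ({..<n} \<times> {..<n})"
    by (rule card_mono) auto
  ultimately show ?thesis unfolding cc_cost_def by (simp add: card_cartesian_product)
qed

lemma inst_instance: "cc_instance n (inst n m k F \<sigma>)"
  unfolding cc_instance_def inst_def by auto

lemma inst_OPT: "cc_OPT n (inst n m k F \<sigma>) = 0"
proof -
  have e1: "{(x, y). x < y \<and> y < n \<and> lab m k F \<sigma> x = lab m k F \<sigma> y \<and> \<not> inst n m k F \<sigma> x y} = {}"
    unfolding inst_def by auto
  have e2: "{(x, y). x < y \<and> y < n \<and> lab m k F \<sigma> x \<noteq> lab m k F \<sigma> y \<and> inst n m k F \<sigma> x y} = {}"
    unfolding inst_def by auto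
  have "cc_cost n (inst n m k F \<sigma>) (lab m k F \<sigma>) = 0"
    unfolding cc_cost_def e1 e2 by simp
  then show ?thesis unfolding cc_OPT_def by (intro Least_eq_0) blast
qed

lemma cost_le_real: "real (cc_cost n s l) \<le> 2 * real n * real n"
proof -
  have "real (cc_cost n s l) \<le> real (2*n*n)" by (simp only: of_nat_le_iff cost_le)
  then show ?thesis by simp
qed

lemma integrable_cost: "integrable (measure_pmf A) (\<lambda>t. real (cc_cost n s (qt_output t s)))"
  by (rule measure_pmf.integrable_const_bound[where B="real (2*n*n)"]) (auto intro!: AE_pmfI simp: cost_le_real)

lemma yao:
  fixes n m k Q :: nat and c T :: real
  assumes F: "F \<subseteq> {m*k..<n}" and m: "m \<ge> 1"
    and hypE: "\<forall>s. cc_instance n s \<longrightarrow> expected_cost n A s \<le> c * real (cc_OPT n s) + T"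
    and hypQ: "\<forall>t\<in>set_pmf A. \<forall>s. cc_instance n s \<longrightarrow> qt_queries t s \<le> Q"
  shows "real (card F * k * (m-1)) \<le> 4*m*T + 4*k*Q"
proof -
  define P where "P = PiE F (\<lambda>_. {..<2*m})"
  define f where "f \<sigma> t = real (cc_cost n (inst n m k F \<sigma>) (qt_output t (inst n m k F \<sigma>)))" for \<sigma> t
  have finF: "finite F" using F finite_subset by blast
  have finP: "finite P" unfolding P_def using finF by (simp add: finite_PiE)
  have cP: "card P > 0" unfolding P_def using finF m by (simp add: card_PiE)
  have int: "integrable (measure_pmf A) (f \<sigma>)" for \<sigma> unfolding f_def by (rule integrable_cost)
  have Ef: "measure_pmf.expectation A (f \<sigma>) \<le> T" for \<sigma>
  proof -
    have "expected_cost n A (inst n m k F \<sigma>) \<le> c * real (cc_OPT n (inst n m k F \<sigma>)) + T"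
      using hypE inst_instance by blast
    then show ?thesis unfolding expected_cost_def f_def inst_OPT by simp
  qed
  have pt: "real (card F * card P * k * (m-1)) \<le> 4*m*(\<Sum>\<sigma>\<in>P. f \<sigma> t) + 4*k*card P*Q"
    if t: "t \<in> set_pmf A" for t
  proof -
    have "\<forall>\<sigma>\<in>P. qt_queries t (inst n m k F \<sigma>) \<le> Q" using hypQ t inst_instance by blast
    from det_bound[OF F m this[unfolded P_def]]
    have "real (card F * card P * k * (m-1)) \<le> real (4*m*(\<Sum>\<sigma>\<in>P. cc_cost n (inst n m k F \<sigma>) (qt_output t (inst n m k F \<sigma>)))
       + 4*k*card P*Q)" unfolding P_def by (simp only: of_nat_le_iff)
    then show ?thesis unfolding f_def of_nat_add of_nat_mult of_nat_sum of_nat_numeral .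
  qed
  have "real (card F * card P * k * (m-1)) = measure_pmf.expectation A (\<lambda>t. real (card F * card P * k * (m-1)))"
    by (simp only: lebesgue_integral_const measure_pmf.prob_space scaleR_one real_scaleR_def mult_1)
  also have "\<dots> \<le> measure_pmf.expectation A (\<lambda>t. 4*m*(\<Sum>\<sigma>\<in>P. f \<sigma> t) + 4*k*card P*Q)"
    by (rule integral_mono_AE) (use int pt in \<open>auto intro!: AE_pmfI\<close>)
  also have "\<dots> = 4*m*(\<Sum>\<sigma>\<in>P. measure_pmf.expectation A (f \<sigma>)) + 4*k*card P*Q"
    using int by (simp add: integral_sum)
  also have "\<dots> \<le> 4*m*(\<Sum>\<sigma>\<in>P. T) + 4*k*card P*Q"
    using Ef by (intro add_mono mult_left_mono sum_mono) auto
  finally have fin: "real (card F * card P * k * (m-1)) \<le> 4*m*(\<Sum>\<sigma>\<in>P. T) + 4*k*card P*Q" .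
  have eq1: "card F * card P * k * (m-1) = card P * (card F * k * (m-1))" by (simp only: ac_simps)
  have eqA: "real (card F * card P * k * (m-1)) = real (card P) * real (card F * k * (m-1))"
    by (simp only: eq1 of_nat_mult)
  have eqB: "4*m*(\<Sum>\<sigma>\<in>P. T) + 4*k*card P*Q = real (card P) * (4*m*T + 4*k*Q)"
    by (simp only: sum_constant) (simp add: ring_distribs mult_ac)
  have "real (card P) * real (card F * k * (m-1)) \<le> real (card P) * (4*m*T + 4*k*Q)"
    using fin eqA eqB by linarith
  then show ?thesis by (rule mult_left_le_imp_le) (use cP in simp)
qed



lemma arith_final:
  fixes N K M q T c D :: real
  assumes N: "N \<ge> 16384" and K: "K > 0" and KN: "K*N \<le> 64*T" and TK: "T \<le> K*N/32"
    and NKM: "N < 2*K*(M+1)" and M: "M \<ge> 16" and MN: "M \<le> N" and c: "c \<ge> 1" and T: "T > 0"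
    and q: "q \<ge> 0" and Y: "D*K*(M-1) \<le> 4*M*T + 4*K*q" and D: "D \<ge> (N-1)/2"
    and K32: "K \<le> N/32"
  shows "q \<ge> (1/16384) * N^3/(T*c^2)"
proof -
  have s1: "(N-1)/2*(K*(M-1)) \<le> D*(K*(M-1))" using D K M by (intro mult_right_mono) auto
  have s2: "M*T \<le> M*(K*N/32)" using TK M by (intro mult_left_mono) auto
  have NM16: "N*M \<ge> N*16" using M N by (intro mult_left_mono) auto
  have e3: "(N-1)*(M-1) = N*M - N - M + 1" by (simp add: algebra_simps)
  have s3: "(N-1)*(M-1) \<ge> N*M/2" unfolding e3 using NM16 MN N by linarith
  have s3': "K*((N-1)*(M-1)) \<ge> K*(N*M/2)" using s3 K by (intro mult_left_mono) auto
  have a1: "K*((N-1)*(M-1))/2 \<le> D*(K*(M-1))"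
  proof -
    have "(N-1)/2*(K*(M-1)) = K*((N-1)*(M-1))/2" by (simp add: algebra_simps)
    then show ?thesis using s1 by linarith
  qed
  have a2: "D*(K*(M-1)) \<le> 4*(M*T) + 4*(K*q)" using Y by (simp add: mult.assoc)
  have a3: "M*T \<le> K*(N*M)/32"
  proof -
    have "M*(K*N/32) = K*(N*M)/32" by (simp add: algebra_simps)
    then show ?thesis using s2 by linarith
  qed
  have a4: "K*(N*M/2) = K*(N*M)/2" by simp
  have "K*(N*M) \<le> 32*(K*q)" using a1 a2 a3 a4 s3' by linarith
  then have "K*(N*M) \<le> K*(32*q)" by (simp add: algebra_simps)
  then have q1: "N*M \<le> 32*q" using K by (simp add: mult_le_cancel_left_pos)
  have eKM: "2*K*(M+1) = 2*(K*M) + 2*K" by (simp add: algebra_simps)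
  have KM: "4*(K*M) \<ge> N" using NKM K32 N unfolding eKM by linarith
  have "N*N \<le> N*(4*(K*M))" using KM N by (intro mult_left_mono) auto
  also have "\<dots> = 4*K*(N*M)" by (simp add: algebra_simps)
  also have "\<dots> \<le> 4*K*(32*q)" using q1 K by (intro mult_left_mono) auto
  finally have q2: "N*N \<le> 128*K*q" by simp
  have "N^3 = N*(N*N)" by (simp add: power3_eq_cube)
  also have "\<dots> \<le> N*(128*K*q)" using q2 N by (intro mult_left_mono) auto
  also have "\<dots> = 128*q*(K*N)" by (simp add: algebra_simps)
  also have "\<dots> \<le> 128*q*(64*T)" using KN q by (intro mult_left_mono) auto
  finally have q3: "N^3 \<le> 8192*T*q" by (simp add: mult_ac)
  have c2: "c^2 \<ge> 1" using c by (simp add: one_le_power)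
  have "(1/16384) * N^3/(T*c^2) \<le> (1/16384) * N^3/T"
  proof (rule frac_le)
    show "0 \<le> 1 / 16384 * N ^ 3" using N by simp
    have "T*1 \<le> T*c^2" using c2 T by (intro mult_left_mono) auto
    then show "T \<le> T*c^2" by simp
  qed (use T in auto)
  also have "\<dots> \<le> q"
  proof -
    have tq: "0 \<le> T*q" using T q by simp
    have q3': "N^3 \<le> 8192*(T*q)" using q3 by (simp add: mult.assoc)
    have "N^3 \<le> 16384*(T*q)" using q3' tq by linarith
    then show ?thesis using T by (simp add: divide_le_eq mult_ac)
  qed
  finally show ?thesis .
qed



lemma main_bound:
  fixes n :: nat and c T :: real and A :: "qtree pmf" and Q :: nat
  assumes h1: "c \<ge> 1" and h2: "8 * real n < T" and h3: "T \<le> (real n)^2 / (2048 * c^2)"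
    and hE: "\<forall>s. cc_instance n s \<longrightarrow> expected_cost n A s \<le> c * real (cc_OPT n s) + T"
    and hQ: "\<forall>t\<in>set_pmf A. \<forall>s. cc_instance n s \<longrightarrow> qt_queries t s \<le> Q"
  shows "real Q \<ge> (1/16384) * (real n)^3 / (T * c^2)"
proof -
  define N where "N = real n"
  have c2: "c^2 \<ge> 1" using h1 by (simp add: one_le_power)
  have Tpos: "T > 0" using h2 by (smt (verit) of_nat_0_le_iff)
  have TN2: "T \<le> N^2/2048"
  proof -
    have "(real n)^2 / (2048 * c^2) \<le> (real n)^2 / 2048"
      using c2 by (intro divide_left_mono) auto
    then show ?thesis using h3 N_def by simp
  qed
  have npos: "n > 0"
  proof (rule ccontr)
    assume "\<not> n > 0" then have "n = 0" by simp
    then show False using TN2 Tpos N_def by simp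
  qed
  have Npos: "N > 0" using npos N_def by simp
  have N: "N \<ge> 16384"
  proof -
    have "8*N < N^2/2048" using h2 TN2 N_def by simp
    then have "N*16384 < N*N" by (simp add: power2_eq_square)
    then show ?thesis using Npos by (simp add: mult_less_cancel_left_pos)
  qed
  define x where "x = 64*T/N"
  have x512: "x > 512"
  proof -
    have "64*T > 512 * N" using h2 N_def by simp
    then show ?thesis unfolding x_def using Npos by (simp add: less_divide_eq)
  qed
  define k where "k = nat \<lfloor>x\<rfloor>"
  have Kx: "real k = of_int \<lfloor>x\<rfloor>" unfolding k_def using x512 by simp
  have K1: "real k \<le> x" using Kx by simp
  have K2: "real k > x - 1" using Kx by linarith
  have kpos: "k > 0" using K2 x512 by simp
  have KN: "real k * N \<le> 64*T"
    using K1 Npos unfolding x_def by (simp add: le_divide_eq)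
  have TK: "T \<le> real k * N/32"
  proof -
    have "real k \<ge> x/2" using K2 x512 by simp
    then have "real k * N \<ge> x/2 * N" using Npos by (intro mult_right_mono) auto
    also have "x/2*N = 32*T" unfolding x_def using Npos by simp
    finally show ?thesis by simp
  qed
  have K32: "real k \<le> N/32"
  proof -
    have "real k * N \<le> N*N/32" using KN TN2 by (simp add: power2_eq_square)
    then show ?thesis using Npos by (simp add: le_divide_eq mult.commute)
  qed
  define m where "m = n div (2*k)"
  have nmod: "n = m*(2*k) + n mod (2*k)" unfolding m_def by (metis div_mult_mod_eq)
  have nmodlt: "n mod (2*k) < 2*k" using kpos by simp
  have NKM: "N < 2*real k*(real m+1)"
  proof -
    have "n < 2*k*(m+1)" using nmod nmodlt by (simp add: algebra_simps)
    then have "real n < real (2*k*(m+1))" by (simp only: of_nat_less_iff)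
    then show ?thesis unfolding N_def by (simp add: algebra_simps)
  qed
  have M16: "real m \<ge> 16"
  proof -
    have "2*real k*(real m+1) \<le> (N/16)*(real m+1)" using K32 by (intro mult_right_mono) auto
    then have "N < (N/16)*(real m+1)" using NKM by linarith
    then have "N*16 < N*(real m+1)" by simp
    then have "16 < real m + 1" using Npos by (simp add: mult_less_cancel_left_pos)
    then show ?thesis by simp
  qed
  then have m1: "m \<ge> 1" by simp
  have MN: "real m \<le> N" unfolding N_def m_def by simp
  define F where "F = {m*k..<m*k + n div 2}"
  have mk2: "2*(m*k) \<le> n" using nmod by (simp add: algebra_simps)
  have "\<forall>z. 2*z \<le> n \<longrightarrow> z + n div 2 \<le> n" by presburger
  then have "m*k + n div 2 \<le> n" using mk2 by blast
  then have Fsub: "F \<subseteq> {m*k..<n}" unfolding F_def by auto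
  have cF: "card F = n div 2" unfolding F_def by simp
  have Y0: "real (card F * k * (m-1)) \<le> 4*m*T + 4*k*Q" by (rule yao[OF Fsub m1 hE hQ])
  have Y: "real (n div 2) * real k * (real m - 1) \<le> 4*real m*T + 4*real k*real Q"
    using Y0 m1 unfolding cF by (simp add: of_nat_diff)
  have D: "real (n div 2) \<ge> (N-1)/2"
  proof -
    have "n \<le> 2*(n div 2) + 1" by simp
    then have "real n \<le> real (2*(n div 2) + 1)" by (simp only: of_nat_le_iff)
    then show ?thesis unfolding N_def by simp
  qed
  have "real Q \<ge> (1/16384) * N^3/(T*c^2)"
    by (rule arith_final[OF N _ KN TK NKM M16 MN h1 Tpos _ Y D K32]) (use kpos in auto)
  then show ?thesis unfolding N_def .
qed

theorem theorem4p1: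
  "\<exists>a::real. a > 0 \<and>
     (\<forall>(n::nat) (c::real) (T::real) (A::qtree pmf) (Q::nat).
        c \<ge> 1 \<longrightarrow> 8 * real n < T \<longrightarrow> T \<le> (real n)^2 / (2048 * c^2) \<longrightarrow>
        (\<forall>s. cc_instance n s \<longrightarrow> expected_cost n A s \<le> c * real (cc_OPT n s) + T) \<longrightarrow>
        (\<forall>t\<in>set_pmf A. \<forall>s. cc_instance n s \<longrightarrow> qt_queries t s \<le> Q) \<longrightarrow>
        real Q \<ge> a * (real n)^3 / (T * c^2))"
  apply (rule exI[where x="1/16384"])
  apply (intro conjI allI impI)
   apply simp
  apply (rule main_bound)
      apply assumption+
  done


end
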